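(* Let $\theta$ be a $\mathbb C$-linear operator on $\Lambda$. Then $E^a\theta=\theta E^a$ for all $a\in\mathbb C$ if and only if $\theta$ is a complex formal power series in the iterated symmetric derivatives $\mathbf D_1,\mathbf D_2,\dots$. That is, if and only if there are complex numbers $c_k$, indexed by finitely supported sequences $k=(k_1,k_2,\dots)$ of nonnegative integers, such that $\theta p=\sum_k c_k\mathbf D_1^{k_1}\mathbf D_2^{k_2}\cdots p$ for every $p\in\Lambda$.
   Context: $\Lambda$ is the algebra of symmetric functions with complex coefficients in the variables $\mathbf y=(y_1,y_2,\dots)$, with basis the monomial symmetric functions $m_\lambda(\mathbf y)$, $\lambda$ ranging over partitions. For $i\ge1$, the $i$-th symmetric derivative $\mathbf D_i$ is the linear operator on $\Lambda$ given by: - $\mathbf D_i m_\lambda=i!\,m_{\lambda\setminus i}$ if $i$ is a part of $\lambda$, where $\lambda\setminus i$ removes one part equal to $i$; - $\mathbf D_i m_\lambda=0$ otherwise. For $a\in\mathbb C$, the symmetric shift $E^a$ is the operator $E^ap(y_1,y_2,\dots)=p(a,y_1,y_2,\dots)$. For each $p$ only finitely many terms of the formal series act nonzero, so the series is well defined. *)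

theory Defs
  imports Complex_Main "HOL-Library.Multiset"
begin

text \<open>Symmetric functions in the variables y_0, y_1, y_2, ... (0-based indexing of
the paper's y_1, y_2, ...), represented by their coefficient function on
exponent vectors (monomials) alpha :: nat => nat with finite support.\<close>

type_synonym expo = "nat \<Rightarrow> nat"
type_synonym sfun = "expo \<Rightarrow> complex"

definition expos :: "expo set" where
  "expos = {\<alpha>. finite {n. \<alpha> n \<noteq> 0}}"

definition degree_ex :: "expo \<Rightarrow> nat" where
  "degree_ex \<alpha> = (\<Sum>n\<in>{n. \<alpha> n \<noteq> 0}. \<alpha> n)"

definition shape :: "expo \<Rightarrow> nat multiset" where
  "shape \<alpha> = image_mset \<alpha> (mset_set {n. \<alpha> n \<noteq> 0})"

definition Lambda :: "sfun set" where
  "Lambda = {p. (\<forall>\<alpha>. \<alpha> \<notin> expos \<longrightarrow> p \<alpha> = 0)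
              \<and> (\<exists>d. \<forall>\<alpha>. degree_ex \<alpha> > d \<longrightarrow> p \<alpha> = 0)
              \<and> (\<forall>\<sigma> \<alpha>. bij \<sigma> \<longrightarrow> \<alpha> \<in> expos \<longrightarrow> p (\<alpha> \<circ> \<sigma>) = p \<alpha>)}"

definition msym :: "nat multiset \<Rightarrow> sfun" where
  "msym mu = (\<lambda>\<alpha>. if \<alpha> \<in> expos \<and> shape \<alpha> = mu then 1 else 0)"

definition canon :: "nat multiset \<Rightarrow> expo" where
  "canon mu = (\<lambda>n. if n < size mu then sorted_list_of_multiset mu ! n else 0)"

definition mcoeff :: "sfun \<Rightarrow> nat multiset \<Rightarrow> complex" where
  "mcoeff p mu = p (canon mu)"

text \<open>Symmetric derivative D_i, the linear extension of
D_i m_lambda = i! m_(lambda minus i) if i in lambda, 0 otherwise.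
The coefficient of m_mu in D_i p is i! times the coefficient of m_(mu + {i}) in p.\<close>
definition symD :: "nat \<Rightarrow> sfun \<Rightarrow> sfun" where
  "symD i p = (\<lambda>\<beta>. if \<beta> \<in> expos then of_nat (fact i) * mcoeff p (shape \<beta> + {#i#}) else 0)"

definition cons_ex :: "nat \<Rightarrow> expo \<Rightarrow> expo" where
  "cons_ex j \<beta> = (\<lambda>n. case n of 0 \<Rightarrow> j | Suc m \<Rightarrow> \<beta> m)"

text \<open>Symmetric shift: (E^a p)(y_0, y_1, ...) = p(a, y_0, y_1, ...).
The coefficient of y^beta is sum_j [coeff of a^j y^beta in p] a^j.\<close>
definition symE :: "complex \<Rightarrow> sfun \<Rightarrow> sfun" where
  "symE a p = (\<lambda>\<beta>. if \<beta> \<in> expos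
      then (\<Sum>j\<in>{j. p (cons_ex j \<beta>) \<noteq> 0}. p (cons_ex j \<beta>) * a ^ j) else 0)"

text \<open>Multi-indices k = (k_1, k_2, ...): here k i is the exponent of D_(i+1).\<close>
definition fin_seqs :: "(nat \<Rightarrow> nat) set" where
  "fin_seqs = {k. finite {i. k i \<noteq> 0}}"

definition supp_bound :: "(nat \<Rightarrow> nat) \<Rightarrow> nat" where
  "supp_bound k = (LEAST N. \<forall>i\<ge>N. k i = 0)"

definition Dmono :: "(nat \<Rightarrow> nat) \<Rightarrow> sfun \<Rightarrow> sfun" where
  "Dmono k = foldr (\<lambda>i f. (symD (Suc i) ^^ k i) \<circ> f) [0..<supp_bound k] id"

definition linear_on_Lambda :: "(sfun \<Rightarrow> sfun) \<Rightarrow> bool" where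
  "linear_on_Lambda \<theta> \<longleftrightarrow> (\<forall>p\<in>Lambda. \<theta> p \<in> Lambda)
     \<and> (\<forall>p\<in>Lambda. \<forall>q\<in>Lambda. \<theta> (\<lambda>\<alpha>. p \<alpha> + q \<alpha>) = (\<lambda>\<alpha>. \<theta> p \<alpha> + \<theta> q \<alpha>))
     \<and> (\<forall>c. \<forall>p\<in>Lambda. \<theta> (\<lambda>\<alpha>. c * p \<alpha>) = (\<lambda>\<alpha>. c * \<theta> p \<alpha>))"

text \<open>The formal series sum_k c_k D^k p (only finitely many k contribute).\<close>
definition Dseries :: "((nat \<Rightarrow> nat) \<Rightarrow> complex) \<Rightarrow> sfun \<Rightarrow> sfun" where
  "Dseries c p = (\<lambda>\<beta>. \<Sum>k\<in>{k\<in>fin_seqs. Dmono k p \<noteq> (\<lambda>_. 0)}. c k * Dmono k p \<beta>)"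

end

theory Submission
  imports Defs "HOL-Combinatorics.Permutations"
begin

definition pos :: "nat multiset \<Rightarrow> bool" where "pos \<nu> \<longleftrightarrow> 0 \<notin># \<nu>"
definition lift :: "(nat multiset \<Rightarrow> complex) \<Rightarrow> sfun" where
  "lift f = (\<lambda>\<alpha>. if \<alpha> \<in> expos then f (shape \<alpha>) else 0)"
definition ms :: "nat \<Rightarrow> nat multiset" where "ms j = (if j = 0 then {#} else {#j#})"
definition bnd :: "(nat multiset \<Rightarrow> complex) \<Rightarrow> nat \<Rightarrow> bool" where
  "bnd f d \<longleftrightarrow> (\<forall>\<nu>. pos \<nu> \<longrightarrow> d < sum_mset \<nu> \<longrightarrow> f \<nu> = 0)"

lemma shape_pos: "pos (shape \<alpha>)"
  unfolding pos_def shape_def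
  by (cases "finite {n. \<alpha> n \<noteq> 0}") auto

lemma expos_comp_bij:
  assumes "\<alpha> \<in> expos" "bij \<sigma>"
  shows "\<alpha> \<circ> \<sigma> \<in> expos" "shape (\<alpha> \<circ> \<sigma>) = shape \<alpha>"
proof -
  let ?S = "{n. \<alpha> n \<noteq> 0}"
  have S: "finite ?S" using assms(1) by (simp add: expos_def)
  have eq: "{n. (\<alpha> \<circ> \<sigma>) n \<noteq> 0} = \<sigma> -` ?S" by auto
  have inj: "inj \<sigma>" using assms(2) bij_is_inj by blast
  show "\<alpha> \<circ> \<sigma> \<in> expos" unfolding expos_def using eq finite_vimageI[OF S inj] by simp
  have im: "\<sigma> ` (\<sigma> -` ?S) = ?S" using bij_is_surj[OF assms(2)] by (rule surj_image_vimage_eq)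
  have "shape (\<alpha> \<circ> \<sigma>) = image_mset \<alpha> (image_mset \<sigma> (mset_set (\<sigma> -` ?S)))"
    unfolding shape_def eq by (simp add: multiset.map_comp)
  also have "image_mset \<sigma> (mset_set (\<sigma> -` ?S)) = mset_set ?S"
    using image_mset_mset_set[of \<sigma> "\<sigma> -` ?S"] inj im by (metis inj_on_subset subset_UNIV)
  finally show "shape (\<alpha> \<circ> \<sigma>) = shape \<alpha>" unfolding shape_def by simp
qed

lemma degree_shape: "degree_ex \<alpha> = sum_mset (shape \<alpha>)"
  unfolding degree_ex_def shape_def by (simp add: sum_unfold_sum_mset)

lemma mset_set_lessThan: "mset_set {..<n} = mset [0..<n]"
  by (metis atLeast_upt mset_set_set distinct_upt)

lemma canon:
  assumes "pos \<nu>"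
  shows "canon \<nu> \<in> expos" "shape (canon \<nu>) = \<nu>"
proof -
  let ?xs = "sorted_list_of_multiset \<nu>"
  have len: "length ?xs = size \<nu>" by (metis mset_sorted_list_of_multiset size_mset)
  have nz: "\<And>n. n < size \<nu> \<Longrightarrow> ?xs ! n \<noteq> 0"
    using assms unfolding pos_def
    by (metis len nth_mem set_sorted_list_of_multiset)
  have supp: "{n. canon \<nu> n \<noteq> 0} = {..<size \<nu>}"
    using nz unfolding canon_def by auto
  show "canon \<nu> \<in> expos" by (simp only: expos_def mem_Collect_eq supp finite_lessThan)
  have "shape (canon \<nu>) = image_mset (canon \<nu>) (mset [0..<size \<nu>])"
    unfolding shape_def supp mset_set_lessThan ..
  also have "\<dots> = mset (map (canon \<nu>) [0..<size \<nu>])" by simp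
  also have "map (canon \<nu>) [0..<size \<nu>] = map (nth ?xs) [0..<length ?xs]"
    using len by (auto simp: canon_def)
  also have "\<dots> = ?xs" by (rule map_nth)
  finally show "shape (canon \<nu>) = \<nu>" by simp
qed

lemma image_mset_zero:
  fixes A :: "nat set"
  shows "finite A \<Longrightarrow> (\<And>x. x \<in> A \<Longrightarrow> \<alpha> x = (0::nat)) \<Longrightarrow> image_mset \<alpha> (mset_set A) = replicate_mset (card A) 0"
  by (induction A rule: finite_induct) auto

lemma mset_map_upt_shape:
  assumes "\<alpha> \<in> expos" "{n. \<alpha> n \<noteq> 0} \<subseteq> {..<N}"
  shows "mset (map \<alpha> [0..<N]) = shape \<alpha> + replicate_mset (N - size (shape \<alpha>)) 0"
proof -
  let ?S = "{n. \<alpha> n \<noteq> 0}"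
  have fS: "finite ?S" using assms(1) by (simp add: expos_def)
  have "mset (map \<alpha> [0..<N]) = image_mset \<alpha> (mset_set {..<N})"
    by (simp add: mset_set_lessThan)
  also have "mset_set {..<N} = mset_set ?S + mset_set ({..<N} - ?S)"
    using assms(2) by (metis Diff_partition Diff_disjoint finite_lessThan mset_set_Union finite_Diff finite_subset)
  also have "image_mset \<alpha> (mset_set ?S + mset_set ({..<N} - ?S)) = shape \<alpha> + image_mset \<alpha> (mset_set ({..<N} - ?S))"
    unfolding shape_def by simp
  also have "image_mset \<alpha> (mset_set ({..<N} - ?S)) = replicate_mset (card ({..<N} - ?S)) 0"
    by (rule image_mset_zero) auto
  finally have "mset (map \<alpha> [0..<N]) = shape \<alpha> + replicate_mset (card ({..<N} - ?S)) 0" .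
  moreover have "card ({..<N} - ?S) = N - card ?S" using assms(2) fS
    by (simp add: card_Diff_subset)
  moreover have "size (shape \<alpha>) = card ?S" unfolding shape_def by simp
  ultimately show ?thesis by simp
qed

lemma sym_eq:
  assumes p: "p \<in> Lambda" and ab: "\<alpha> \<in> expos" "\<beta> \<in> expos" and sh: "shape \<alpha> = shape \<beta>"
  shows "p \<alpha> = p \<beta>"
proof -
  have "finite ({n. \<alpha> n \<noteq> 0} \<union> {n. \<beta> n \<noteq> 0})" using ab by (simp add: expos_def)
  then obtain N where N: "{n. \<alpha> n \<noteq> 0} \<union> {n. \<beta> n \<noteq> 0} \<subseteq> {..<N}"
    using finite_nat_set_iff_bounded by (metis lessThan_iff subsetI)
  have "mset (map \<alpha> [0..<N]) = mset (map \<beta> [0..<N])"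
    using mset_map_upt_shape[OF ab(1)] mset_map_upt_shape[OF ab(2)] N sh by auto
  then obtain \<pi> where \<pi>: "\<pi> permutes {..<length (map \<beta> [0..<N])}"
      "permute_list \<pi> (map \<beta> [0..<N]) = map \<alpha> [0..<N]"
    by (rule mset_eq_permutation)
  have \<pi>N: "\<pi> permutes {..<N}" using \<pi>(1) by simp
  have "\<alpha> = \<beta> \<circ> \<pi>"
  proof
    fix i
    show "\<alpha> i = (\<beta> \<circ> \<pi>) i"
    proof (cases "i < N")
      case True
      have "map \<alpha> [0..<N] ! i = permute_list \<pi> (map \<beta> [0..<N]) ! i" using \<pi>(2) by simp
      also have "\<dots> = map \<beta> [0..<N] ! \<pi> i" using permute_list_nth[OF \<pi>(1)] True by simp
      finally show ?thesis using True permutes_in_image[OF \<pi>N, of i] by simp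
    next
      case False
      then have "\<pi> i = i" using permutes_not_in[OF \<pi>N] by simp
      moreover have "\<alpha> i = 0" "\<beta> i = 0" using N False by auto
      ultimately show ?thesis by simp
    qed
  qed
  moreover have "bij \<pi>" using permutes_bij[OF \<pi>N] .
  ultimately show ?thesis using p ab(2) unfolding Lambda_def by auto
qed

lemma mcoeff_lift: "pos \<nu> \<Longrightarrow> mcoeff (lift f) \<nu> = f \<nu>"
  unfolding mcoeff_def lift_def using canon by simp

lemma Lambda_lift: "p \<in> Lambda \<Longrightarrow> lift (mcoeff p) = p"
proof
  fix \<alpha> assume p: "p \<in> Lambda"
  show "lift (mcoeff p) \<alpha> = p \<alpha>"
  proof (cases "\<alpha> \<in> expos")
    case True
    then show ?thesis unfolding lift_def mcoeff_def
      using sym_eq[OF p canon(1)[OF shape_pos] True] canon(2)[OF shape_pos] by simp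
  next
    case False
    then show ?thesis using p unfolding lift_def Lambda_def by simp
  qed
qed

lemma lift_cong: "(\<And>\<nu>. pos \<nu> \<Longrightarrow> f \<nu> = g \<nu>) \<Longrightarrow> lift f = lift g"
  unfolding lift_def using shape_pos by auto

lemma lift_in_Lambda: assumes "bnd f d" shows "lift f \<in> Lambda"
  unfolding Lambda_def
proof (intro CollectI conjI allI impI)
  show "\<alpha> \<notin> expos \<Longrightarrow> lift f \<alpha> = 0" for \<alpha> by (simp add: lift_def)
  show "\<exists>d. \<forall>\<alpha>. d < degree_ex \<alpha> \<longrightarrow> lift f \<alpha> = 0"
    using assms shape_pos unfolding bnd_def lift_def degree_shape by auto
  show "bij \<sigma> \<Longrightarrow> \<alpha> \<in> expos \<Longrightarrow> lift f (\<alpha> \<circ> \<sigma>) = lift f \<alpha>" for \<sigma> \<alpha>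
    using expos_comp_bij[of \<alpha> \<sigma>] unfolding lift_def by simp
qed

lemma Lambda_bnd: assumes "p \<in> Lambda" shows "\<exists>d. bnd (mcoeff p) d"
proof -
  obtain d where d: "\<forall>\<alpha>. degree_ex \<alpha> > d \<longrightarrow> p \<alpha> = 0" using assms unfolding Lambda_def by blast
  have "bnd (mcoeff p) d" unfolding bnd_def mcoeff_def
  proof (intro allI impI)
    fix \<nu> :: "nat multiset" assume "pos \<nu>" "d < sum_mset \<nu>"
    then have "degree_ex (canon \<nu>) > d" using degree_shape canon(2) by simp
    then show "p (canon \<nu>) = 0" using d by blast
  qed
  then show ?thesis ..
qed

lemma bnd_mono: "bnd f d \<Longrightarrow> d \<le> e \<Longrightarrow> bnd f e"
  unfolding bnd_def by auto

lemma Lambda_bnd_le: assumes "p \<in> Lambda" shows "\<exists>d. \<forall>e\<ge>d. bnd (mcoeff p) e"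
  using Lambda_bnd[OF assms] bnd_mono by blast

lemma cons_ex:
  assumes "\<beta> \<in> expos"
  shows "cons_ex j \<beta> \<in> expos" "shape (cons_ex j \<beta>) = shape \<beta> + ms j"
proof -
  let ?S = "{n. \<beta> n \<noteq> 0}"
  have fS: "finite ?S" using assms by (simp add: expos_def)
  have supp: "{n. cons_ex j \<beta> n \<noteq> 0} = (if j = 0 then {} else {0}) \<union> Suc ` ?S"
    apply (rule set_eqI)
    subgoal for n by (cases n) (auto simp: cons_ex_def)
    done
  show "cons_ex j \<beta> \<in> expos" unfolding expos_def using supp fS by simp
  have dis: "(if j = 0 then {} else {0}) \<inter> Suc ` ?S = {}" by auto
  have "mset_set {n. cons_ex j \<beta> n \<noteq> 0} = mset_set (if j = 0 then {} else {0}) + mset_set (Suc ` ?S)"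
    unfolding supp using fS dis by (simp add: mset_set_Union)
  also have "mset_set (Suc ` ?S) = image_mset Suc (mset_set ?S)"
    by (simp add: image_mset_mset_set)
  finally show "shape (cons_ex j \<beta>) = shape \<beta> + ms j"
    unfolding shape_def ms_def by (simp add: multiset.map_comp comp_def cons_ex_def)
qed

lemma pos_add[simp]: "pos (\<mu> + \<nu>) \<longleftrightarrow> pos \<mu> \<and> pos \<nu>"
  unfolding pos_def by auto
lemma pos_ms[simp]: "pos (ms j)" unfolding pos_def ms_def by auto
lemma sum_ms[simp]: "sum_mset (ms j) = j" unfolding ms_def by auto
lemma pos_single[simp]: "pos {#i#} \<longleftrightarrow> 0 < i" unfolding pos_def by auto
lemma pos_add_mset[simp]: "pos (add_mset x \<nu>) \<longleftrightarrow> 0 < x \<and> pos \<nu>" unfolding pos_def by auto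
lemma pos_empty[simp]: "pos {#}" unfolding pos_def by auto
lemma pos_rep[simp]: "0 < i \<Longrightarrow> pos (replicate_mset n i)" unfolding pos_def by auto

lemma symE_lift:
  assumes "bnd f D"
  shows "symE a (lift f) = lift (\<lambda>\<nu>. \<Sum>j\<le>D. f (\<nu> + ms j) * a ^ j)"
proof
  fix \<beta>
  show "symE a (lift f) \<beta> = lift (\<lambda>\<nu>. \<Sum>j\<le>D. f (\<nu> + ms j) * a ^ j) \<beta>"
  proof (cases "\<beta> \<in> expos")
    case False then show ?thesis by (simp add: symE_def lift_def)
  next
    case True
    have e: "lift f (cons_ex j \<beta>) = f (shape \<beta> + ms j)" for j
      using cons_ex[OF True] by (simp add: lift_def)
    have sub: "{j. f (shape \<beta> + ms j) \<noteq> 0} \<subseteq> {..D}"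
    proof
      fix j assume j: "j \<in> {j. f (shape \<beta> + ms j) \<noteq> 0}"
      show "j \<in> {..D}"
      proof (rule ccontr)
        assume "j \<notin> {..D}"
        then have "D < sum_mset (shape \<beta> + ms j)" by simp
        then have "f (shape \<beta> + ms j) = 0" using assms shape_pos unfolding bnd_def by simp
        then show False using j by simp
      qed
    qed
    have "symE a (lift f) \<beta> = (\<Sum>j\<in>{j. f (shape \<beta> + ms j) \<noteq> 0}. f (shape \<beta> + ms j) * a ^ j)"
      using True by (simp add: symE_def e)
    also have "\<dots> = (\<Sum>j\<le>D. f (shape \<beta> + ms j) * a ^ j)"
      by (rule sum.mono_neutral_left) (use sub in auto)
    finally show ?thesis using True by (simp add: lift_def)
  qed
qed

lemma symD_lift:
  assumes "0 < i"
  shows "symD i (lift g) = lift (\<lambda>\<nu>. of_nat (fact i) * g (\<nu> + {#i#}))"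
proof (rule ext)
  fix \<beta>
  have "mcoeff (lift g) (shape \<beta> + {#i#}) = g (shape \<beta> + {#i#})"
    using shape_pos[of \<beta>] assms by (intro mcoeff_lift) simp
  then show "symD i (lift g) \<beta> = lift (\<lambda>\<nu>. of_nat (fact i) * g (\<nu> + {#i#})) \<beta>"
    unfolding symD_def lift_def by simp
qed

lemma symD_pow_lift:
  assumes "0 < i"
  shows "(symD i ^^ n) (lift g) = lift (\<lambda>\<nu>. of_nat (fact i) ^ n * g (\<nu> + replicate_mset n i))"
proof (induction n)
  case 0
  then show ?case by simp
next
  case (Suc n)
  have "(symD i ^^ Suc n) (lift g) = symD i ((symD i ^^ n) (lift g))" by simp
  also have "\<dots> = lift (\<lambda>\<nu>. of_nat (fact i) * (of_nat (fact i) ^ n * g (\<nu> + {#i#} + replicate_mset n i)))"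
    unfolding Suc symD_lift[OF assms] ..
  also have "\<dots> = lift (\<lambda>\<nu>. of_nat (fact i) ^ Suc n * g (\<nu> + replicate_mset (Suc n) i))"
    by (rule lift_cong) (simp add: algebra_simps)
  finally show ?case .
qed

lemma foldr_lift:
  "foldr (\<lambda>i f. (symD (Suc i) ^^ k i) \<circ> f) xs id (lift g)
   = lift (\<lambda>\<nu>. (\<Prod>i\<leftarrow>xs. of_nat (fact (Suc i)) ^ k i) * g (\<nu> + (\<Sum>i\<leftarrow>xs. replicate_mset (k i) (Suc i))))"
proof (induction xs)
  case Nil
  then show ?case by simp
next
  case (Cons x xs)
  let ?P = "\<Prod>i\<leftarrow>xs. of_nat (fact (Suc i)) ^ k i" and ?S = "\<Sum>i\<leftarrow>xs. replicate_mset (k i) (Suc i)"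
  have "foldr (\<lambda>i f. (symD (Suc i) ^^ k i) \<circ> f) (x # xs) id (lift g)
     = (symD (Suc x) ^^ k x) (foldr (\<lambda>i f. (symD (Suc i) ^^ k i) \<circ> f) xs id (lift g))" by simp
  also have "\<dots> = (symD (Suc x) ^^ k x) (lift (\<lambda>\<nu>. ?P * g (\<nu> + ?S)))" unfolding Cons ..
  also have "\<dots> = lift (\<lambda>\<nu>. of_nat (fact (Suc x)) ^ k x * (?P * g (\<nu> + replicate_mset (k x) (Suc x) + ?S)))"
    by (rule symD_pow_lift) simp
  also have "\<dots> = lift (\<lambda>\<nu>. (\<Prod>i\<leftarrow>x # xs. of_nat (fact (Suc i)) ^ k i) * g (\<nu> + (\<Sum>i\<leftarrow>x # xs. replicate_mset (k i) (Suc i))))"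
    by (rule lift_cong) (simp add: add.assoc mult.assoc del: fact_Suc)
  finally show ?case .
qed

definition Mk :: "(nat \<Rightarrow> nat) \<Rightarrow> nat multiset" where
  "Mk k = (\<Sum>i\<leftarrow>[0..<supp_bound k]. replicate_mset (k i) (Suc i))"
definition wk :: "(nat \<Rightarrow> nat) \<Rightarrow> complex" where
  "wk k = (\<Prod>i\<leftarrow>[0..<supp_bound k]. of_nat (fact (Suc i)) ^ k i)"

lemma Dmono_lift: "Dmono k (lift g) = lift (\<lambda>\<nu>. wk k * g (\<nu> + Mk k))"
  unfolding Dmono_def Mk_def wk_def foldr_lift ..

lemma wk_nz: "wk k \<noteq> 0"
  unfolding wk_def by (auto simp add: prod_list_zero_iff fact_nonzero simp del: fact_Suc)

lemma supp_bound: assumes "k \<in> fin_seqs" "supp_bound k \<le> i" shows "k i = 0"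
proof -
  obtain N where "\<forall>n\<in>{i. k i \<noteq> 0}. n < N" using assms(1) finite_nat_set_iff_bounded
    unfolding fin_seqs_def by blast
  then have ex: "\<exists>N. \<forall>i\<ge>N. k i = 0" by (intro exI[of _ N]) (auto simp: not_less[symmetric])
  have "\<forall>j\<ge>supp_bound k. k j = 0" unfolding supp_bound_def by (rule LeastI_ex[OF ex])
  then show ?thesis using assms(2) by simp
qed

lemma count_Mk: "count (Mk k) x = (\<Sum>i<supp_bound k. if x = Suc i then k i else 0)"
  unfolding Mk_def
  by (simp add: sum_set_upt_conv_sum_list_nat[symmetric] count_sum atLeast0LessThan)

lemma count_Mk0: "count (Mk k) 0 = 0" unfolding count_Mk by simp

lemma count_Mk_Suc: assumes "k \<in> fin_seqs" shows "count (Mk k) (Suc j) = k j"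
proof -
  have "count (Mk k) (Suc j) = (\<Sum>i<supp_bound k. if j = i then k i else 0)"
    unfolding count_Mk by simp
  also have "\<dots> = (if j \<in> {..<supp_bound k} then k j else 0)"
    by (rule sum.delta') simp
  also have "\<dots> = k j" using supp_bound[OF assms, of j] by auto
  finally show ?thesis .
qed

lemma pos_Mk: "pos (Mk k)" unfolding pos_def using count_Mk0 by (simp add: not_in_iff)

lemma Mk_inj: "inj_on Mk fin_seqs"
proof (rule inj_onI)
  fix k k' assume "k \<in> fin_seqs" "k' \<in> fin_seqs" "Mk k = Mk k'"
  then show "k = k'" using count_Mk_Suc[of k] count_Mk_Suc[of k'] by (intro ext) simp
qed

lemma Mk_surj: assumes "pos \<nu>" shows "\<exists>k\<in>fin_seqs. Mk k = \<nu>"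
proof -
  let ?k = "\<lambda>i. count \<nu> (Suc i)"
  have "{i. ?k i \<noteq> 0} \<subseteq> (\<lambda>x. x - 1) ` set_mset \<nu>"
  proof
    fix i assume "i \<in> {i. count \<nu> (Suc i) \<noteq> 0}"
    then have "Suc i \<in># \<nu>" by (simp add: count_eq_zero_iff[symmetric])
    then show "i \<in> (\<lambda>x. x - 1) ` set_mset \<nu>" by (rule rev_image_eqI) simp
  qed
  then have k: "?k \<in> fin_seqs" unfolding fin_seqs_def by (auto intro: finite_subset)
  have "Mk ?k = \<nu>"
  proof (rule multiset_eqI)
    fix x show "count (Mk ?k) x = count \<nu> x"
      using assms count_Mk0 count_Mk_Suc[OF k] unfolding pos_def
      by (cases x) (auto simp: not_in_iff)
  qed
  then show ?thesis using k by blast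
qed

lemma elem_le_sum: "x \<in># (\<nu>::nat multiset) \<Longrightarrow> x \<le> sum_mset \<nu>"
  using sum_mset.remove by fastforce

lemma size_le_sum: "pos \<nu> \<Longrightarrow> size \<nu> \<le> sum_mset \<nu>"
proof (induction \<nu>)
  case empty
  then show ?case by simp
next
  case (add x \<nu>)
  then have "0 < x" "pos \<nu>" unfolding pos_def by auto
  then show ?case using add by simp
qed

definition Fs :: "nat \<Rightarrow> nat multiset set" where
  "Fs d = {\<nu>. pos \<nu> \<and> sum_mset \<nu> \<le> d}"

lemma finite_Fs: "finite (Fs d)"
proof (rule finite_subset)
  show "Fs d \<subseteq> (\<Union>n\<le>d. multisets_of_size {..d} n)"
  proof
    fix \<nu> assume "\<nu> \<in> Fs d"
    then have p: "pos \<nu>" "sum_mset \<nu> \<le> d" unfolding Fs_def by auto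
    have "set_mset \<nu> \<subseteq> {..d}" using elem_le_sum p(2) by fastforce
    moreover have "size \<nu> \<le> d" using size_le_sum[OF p(1)] p(2) by simp
    ultimately show "\<nu> \<in> (\<Union>n\<le>d. multisets_of_size {..d} n)"
      unfolding multisets_of_size_def by blast
  qed
  show "finite (\<Union>n\<le>d. multisets_of_size {..d} n)" by auto
qed


definition Tm :: "nat multiset \<Rightarrow> sfun \<Rightarrow> sfun" where
  "Tm \<mu> p = lift (\<lambda>\<nu>. mcoeff p (\<nu> + \<mu>))"

definition zex :: expo where "zex = (\<lambda>_. 0)"

lemma zex: "zex \<in> expos" "shape zex = {#}"
  unfolding zex_def expos_def shape_def by auto

lemma lift_zero: "lift (\<lambda>_. 0) = (\<lambda>_. 0)" unfolding lift_def by auto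

lemma zero_Lambda: "(\<lambda>_. 0) \<in> Lambda"
  using lift_in_Lambda[of "\<lambda>_. 0" 0] lift_zero by (simp add: bnd_def)

lemma Lambda_lin:
  assumes "p \<in> Lambda" "q \<in> Lambda"
  shows "(\<lambda>\<alpha>. a * p \<alpha> + b * q \<alpha>) \<in> Lambda"
proof -
  obtain d where d: "bnd (mcoeff p) d" using Lambda_bnd[OF assms(1)] by blast
  obtain e where e: "bnd (mcoeff q) e" using Lambda_bnd[OF assms(2)] by blast
  have b: "bnd (\<lambda>\<nu>. a * mcoeff p \<nu> + b * mcoeff q \<nu>) (max d e)"
    using d e unfolding bnd_def by simp
  have "(\<lambda>\<alpha>. a * p \<alpha> + b * q \<alpha>) = lift (\<lambda>\<nu>. a * mcoeff p \<nu> + b * mcoeff q \<nu>)"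
  proof (rule ext)
    fix \<alpha>
    have "p \<alpha> = lift (mcoeff p) \<alpha>" "q \<alpha> = lift (mcoeff q) \<alpha>"
      using Lambda_lift[OF assms(1)] Lambda_lift[OF assms(2)] by simp_all
    then show "a * p \<alpha> + b * q \<alpha> = lift (\<lambda>\<nu>. a * mcoeff p \<nu> + b * mcoeff q \<nu>) \<alpha>"
      unfolding lift_def by simp
  qed
  then show ?thesis using lift_in_Lambda[OF b] by simp
qed

lemma Lambda_sum:
  assumes "finite A" "\<And>i. i \<in> A \<Longrightarrow> q i \<in> Lambda"
  shows "(\<lambda>\<alpha>. \<Sum>i\<in>A. c i * q i \<alpha>) \<in> Lambda"
  using assms
proof (induction A rule: finite_induct)
  case empty
  then show ?case using zero_Lambda by simp
next
  case (insert x F)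
  have "(\<lambda>\<alpha>. c x * q x \<alpha> + 1 * (\<Sum>i\<in>F. c i * q i \<alpha>)) \<in> Lambda"
    using insert by (intro Lambda_lin) auto
  then show ?case using insert by simp
qed

lemma lin_add: "linear_on_Lambda \<theta> \<Longrightarrow> p \<in> Lambda \<Longrightarrow> q \<in> Lambda \<Longrightarrow> \<theta> (\<lambda>\<alpha>. p \<alpha> + q \<alpha>) = (\<lambda>\<alpha>. \<theta> p \<alpha> + \<theta> q \<alpha>)"
  unfolding linear_on_Lambda_def by blast
lemma lin_scale: "linear_on_Lambda \<theta> \<Longrightarrow> p \<in> Lambda \<Longrightarrow> \<theta> (\<lambda>\<alpha>. c * p \<alpha>) = (\<lambda>\<alpha>. c * \<theta> p \<alpha>)"
  unfolding linear_on_Lambda_def by blast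
lemma lin_Lambda: "linear_on_Lambda \<theta> \<Longrightarrow> p \<in> Lambda \<Longrightarrow> \<theta> p \<in> Lambda"
  unfolding linear_on_Lambda_def by blast

lemma theta_zero: assumes "linear_on_Lambda \<theta>" shows "\<theta> (\<lambda>_. 0) = (\<lambda>_. 0)"
proof -
  have "\<theta> (\<lambda>\<alpha>. 0 * (0::complex)) = (\<lambda>\<alpha>. 0 * \<theta> (\<lambda>_. 0) \<alpha>)"
    using lin_scale[OF assms zero_Lambda, of 0] by simp
  then show ?thesis by simp
qed

lemma theta_sum:
  assumes lin: "linear_on_Lambda \<theta>" and "finite A" "\<And>i. i \<in> A \<Longrightarrow> q i \<in> Lambda"
  shows "\<theta> (\<lambda>\<alpha>. \<Sum>i\<in>A. c i * q i \<alpha>) = (\<lambda>\<alpha>. \<Sum>i\<in>A. c i * \<theta> (q i) \<alpha>)"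
  using assms(2,3)
proof (induction A rule: finite_induct)
  case empty
  then show ?case using theta_zero[OF lin] by simp
next
  case (insert x F)
  have s1: "(\<lambda>\<alpha>. c x * q x \<alpha>) \<in> Lambda" using Lambda_lin[of "q x" "q x" "c x" 0] insert by simp
  have s2: "(\<lambda>\<alpha>. \<Sum>i\<in>F. c i * q i \<alpha>) \<in> Lambda" using Lambda_sum[of F q c] insert by simp
  have "\<theta> (\<lambda>\<alpha>. \<Sum>i\<in>insert x F. c i * q i \<alpha>) = \<theta> (\<lambda>\<alpha>. (\<lambda>\<alpha>. c x * q x \<alpha>) \<alpha> + (\<lambda>\<alpha>. \<Sum>i\<in>F. c i * q i \<alpha>) \<alpha>)"
    using insert by simp
  also have "\<dots> = (\<lambda>\<alpha>. \<theta> (\<lambda>\<alpha>. c x * q x \<alpha>) \<alpha> + \<theta> (\<lambda>\<alpha>. \<Sum>i\<in>F. c i * q i \<alpha>) \<alpha>)"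
    using lin_add[OF lin s1 s2] by simp
  also have "\<theta> (\<lambda>\<alpha>. c x * q x \<alpha>) = (\<lambda>\<alpha>. c x * \<theta> (q x) \<alpha>)"
    by (rule lin_scale[OF lin]) (simp add: insert.prems)
  also have "\<theta> (\<lambda>\<alpha>. \<Sum>i\<in>F. c i * q i \<alpha>) = (\<lambda>\<alpha>. \<Sum>i\<in>F. c i * \<theta> (q i) \<alpha>)"
    by (rule insert.IH) (simp add: insert.prems)
  finally show ?case using insert.hyps by (simp add: sum.insert)
qed

lemma Tm_bnd: "pos \<mu> \<Longrightarrow> bnd (mcoeff p) d \<Longrightarrow> bnd (mcoeff (Tm \<mu> p)) d"
  unfolding bnd_def Tm_def by (simp add: mcoeff_lift)

lemma bnd_lift: "bnd (mcoeff (lift f)) d \<Longrightarrow> lift f \<in> Lambda"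
proof -
  assume "bnd (mcoeff (lift f)) d"
  then have "bnd f d" unfolding bnd_def by (simp add: mcoeff_lift)
  then show ?thesis by (rule lift_in_Lambda)
qed

lemma Tm_Lambda: "pos \<mu> \<Longrightarrow> p \<in> Lambda \<Longrightarrow> Tm \<mu> p \<in> Lambda"
  using Lambda_bnd[of p] Tm_bnd[of \<mu> p] bnd_lift unfolding Tm_def by blast

lemma Tm_empty: "p \<in> Lambda \<Longrightarrow> Tm {#} p = p"
  unfolding Tm_def using Lambda_lift by simp

lemma Tm_Tm: "pos \<mu> \<Longrightarrow> Tm \<mu> (Tm \<nu> p) = Tm (\<mu> + \<nu>) p"
  unfolding Tm_def by (rule lift_cong) (simp add: mcoeff_lift add.assoc)

lemma symE_Tm:
  assumes "p \<in> Lambda" "bnd (mcoeff p) D"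
  shows "symE a p = (\<lambda>\<beta>. \<Sum>j\<in>{..D}. a ^ j * Tm (ms j) p \<beta>)"
proof -
  have "symE a p = symE a (lift (mcoeff p))" using Lambda_lift[OF assms(1)] by simp
  also have "\<dots> = lift (\<lambda>\<nu>. \<Sum>j\<le>D. mcoeff p (\<nu> + ms j) * a ^ j)" by (rule symE_lift[OF assms(2)])
  also have "\<dots> = (\<lambda>\<beta>. \<Sum>j\<in>{..D}. a ^ j * Tm (ms j) p \<beta>)"
    unfolding Tm_def lift_def by (auto simp: mult.commute)
  finally show ?thesis .
qed

lemma bnd_common:
  assumes "p \<in> Lambda" "q \<in> Lambda"
  obtains D where "j \<le> D" "bnd (mcoeff p) D" "bnd (mcoeff q) D"
proof -
  obtain d where d: "bnd (mcoeff p) d" using Lambda_bnd[OF assms(1)] by blast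
  obtain e where e: "bnd (mcoeff q) e" using Lambda_bnd[OF assms(2)] by blast
  show ?thesis
    by (rule that[of "max j (max d e)"]) (auto intro: bnd_mono[OF d] bnd_mono[OF e])
qed

lemma comm_Tm:
  assumes lin: "linear_on_Lambda \<theta>"
    and comm: "\<forall>a. \<forall>p\<in>Lambda. symE a (\<theta> p) = \<theta> (symE a p)"
    and p: "p \<in> Lambda"
  shows "Tm (ms j) (\<theta> p) = \<theta> (Tm (ms j) p)"
proof -
  have tp: "\<theta> p \<in> Lambda" using lin_Lambda[OF lin p] .
  obtain D where D: "j \<le> D" "bnd (mcoeff p) D" "bnd (mcoeff (\<theta> p)) D"
    using bnd_common[OF p tp] by blast
  have TL: "\<And>i. Tm (ms i) p \<in> Lambda" using Tm_Lambda[OF pos_ms p] .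
  have eq: "\<And>a. (\<lambda>\<beta>. \<Sum>i\<in>{..D}. a ^ i * Tm (ms i) (\<theta> p) \<beta>)
      = (\<lambda>\<beta>. \<Sum>i\<in>{..D}. a ^ i * \<theta> (Tm (ms i) p) \<beta>)"
  proof -
    fix a
    have "(\<lambda>\<beta>. \<Sum>i\<in>{..D}. a ^ i * Tm (ms i) (\<theta> p) \<beta>) = symE a (\<theta> p)"
      using symE_Tm[OF tp D(3)] by simp
    also have "\<dots> = \<theta> (symE a p)" using comm p by blast
    also have "symE a p = (\<lambda>\<beta>. \<Sum>i\<in>{..D}. a ^ i * Tm (ms i) p \<beta>)"
      using symE_Tm[OF p D(2)] by simp
    also have "\<theta> \<dots> = (\<lambda>\<beta>. \<Sum>i\<in>{..D}. a ^ i * \<theta> (Tm (ms i) p) \<beta>)"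
      by (rule theta_sum[OF lin]) (auto intro: TL)
    finally show "?thesis a" .
  qed
  show ?thesis
  proof (rule ext)
    fix \<beta>
    have "\<forall>a. (\<Sum>i\<le>D. Tm (ms i) (\<theta> p) \<beta> * a ^ i) = (\<Sum>i\<le>D. \<theta> (Tm (ms i) p) \<beta> * a ^ i)"
    proof
      fix a
      have "(\<Sum>i\<in>{..D}. a ^ i * Tm (ms i) (\<theta> p) \<beta>) = (\<Sum>i\<in>{..D}. a ^ i * \<theta> (Tm (ms i) p) \<beta>)"
        using fun_cong[OF eq[of a], of \<beta>] .
      then show "(\<Sum>i\<le>D. Tm (ms i) (\<theta> p) \<beta> * a ^ i) = (\<Sum>i\<le>D. \<theta> (Tm (ms i) p) \<beta> * a ^ i)"
        by (simp add: mult.commute)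
    qed
    then have "\<forall>i\<le>D. Tm (ms i) (\<theta> p) \<beta> = \<theta> (Tm (ms i) p) \<beta>"
      by (rule polyfun_eq_coeffs[THEN iffD1])
    then show "Tm (ms j) (\<theta> p) \<beta> = \<theta> (Tm (ms j) p) \<beta>"
      using D(1) by simp
  qed
qed

lemma chain:
  assumes lin: "linear_on_Lambda \<theta>"
    and commT: "\<And>x q. 0 < x \<Longrightarrow> q \<in> Lambda \<Longrightarrow> Tm {#x#} (\<theta> q) = \<theta> (Tm {#x#} q)"
    and "pos \<mu>"
  shows "\<forall>p\<in>Lambda. \<forall>\<gamma>\<in>expos. \<theta> p (canon (shape \<gamma> + \<mu>)) = \<theta> (Tm \<mu> p) \<gamma>"
  using assms(3)
proof (induction \<mu>)
  case empty
  show ?case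
  proof (intro ballI)
    fix p \<gamma> assume p: "p \<in> Lambda" and g: "\<gamma> \<in> expos"
    have "\<theta> p (canon (shape \<gamma>)) = \<theta> p \<gamma>"
      using sym_eq[OF lin_Lambda[OF lin p] canon(1)[OF shape_pos] g] canon(2)[OF shape_pos] by simp
    then show "\<theta> p (canon (shape \<gamma> + {#})) = \<theta> (Tm {#} p) \<gamma>" using Tm_empty[OF p] by simp
  qed
next
  case (add x \<mu>)
  then have x: "0 < x" and pm: "pos \<mu>" by auto
  have IH: "\<forall>p\<in>Lambda. \<forall>\<gamma>\<in>expos. \<theta> p (canon (shape \<gamma> + \<mu>)) = \<theta> (Tm \<mu> p) \<gamma>"
    using add.IH pm by blast
  show ?case
  proof (intro ballI)
    fix p \<gamma> assume p: "p \<in> Lambda" and g: "\<gamma> \<in> expos"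
    have TL: "Tm \<mu> p \<in> Lambda" using Tm_Lambda[OF pm p] .
    let ?g' = "canon (shape \<gamma> + {#x#})"
    have pg: "pos (shape \<gamma> + {#x#})" using shape_pos x by simp
    have g': "?g' \<in> expos" "shape ?g' = shape \<gamma> + {#x#}" using canon[OF pg] by auto
    have "\<theta> (Tm (add_mset x \<mu>) p) \<gamma> = \<theta> (Tm {#x#} (Tm \<mu> p)) \<gamma>"
      using Tm_Tm[of "{#x#}" \<mu> p] x by simp
    also have "\<dots> = Tm {#x#} (\<theta> (Tm \<mu> p)) \<gamma>" using commT[OF x TL] by simp
    also have "\<dots> = \<theta> (Tm \<mu> p) ?g'"
      using g pg by (simp add: Tm_def lift_def mcoeff_def)
    also have "\<dots> = \<theta> p (canon (shape ?g' + \<mu>))" using IH p g'(1) by simp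
    also have "\<dots> = \<theta> p (canon (shape \<gamma> + add_mset x \<mu>))" using g'(2) by simp
    finally show "\<theta> p (canon (shape \<gamma> + add_mset x \<mu>)) = \<theta> (Tm (add_mset x \<mu>) p) \<gamma>" by simp
  qed
qed

lemma msym_lift: "msym \<rho> = lift (\<lambda>\<nu>. if \<nu> = \<rho> then 1 else 0)"
  unfolding msym_def lift_def by auto

lemma msym_Lambda: "msym \<rho> \<in> Lambda"
  unfolding msym_lift by (rule lift_in_Lambda[of _ "sum_mset \<rho>"]) (auto simp: bnd_def)

lemma expand:
  assumes q: "q \<in> Lambda" and d: "bnd (mcoeff q) d"
  shows "q = (\<lambda>\<alpha>. \<Sum>\<rho>\<in>Fs d. mcoeff q \<rho> * msym \<rho> \<alpha>)"
proof (rule ext)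
  fix \<alpha>
  show "q \<alpha> = (\<Sum>\<rho>\<in>Fs d. mcoeff q \<rho> * msym \<rho> \<alpha>)"
  proof (cases "\<alpha> \<in> expos")
    case False
    have "q \<alpha> = 0" using q False unfolding Lambda_def by blast
    then show ?thesis using False by (simp add: msym_def)
  next
    case True
    have qa: "q \<alpha> = mcoeff q (shape \<alpha>)"
    proof -
      have "q \<alpha> = lift (mcoeff q) \<alpha>" using Lambda_lift[OF q] by simp
      then show ?thesis using True by (simp add: lift_def)
    qed
    have "(\<Sum>\<rho>\<in>Fs d. mcoeff q \<rho> * msym \<rho> \<alpha>) = (\<Sum>\<rho>\<in>Fs d. if shape \<alpha> = \<rho> then mcoeff q \<rho> else 0)"
      using True by (intro sum.cong) (auto simp: msym_def)
    also have "\<dots> = (if shape \<alpha> \<in> Fs d then mcoeff q (shape \<alpha>) else 0)"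
      using finite_Fs by (simp add: sum.delta)
    also have "\<dots> = mcoeff q (shape \<alpha>)"
      using d shape_pos[of \<alpha>] unfolding Fs_def bnd_def by auto
    finally show ?thesis using qa by simp
  qed
qed

lemma theta_zex:
  assumes lin: "linear_on_Lambda \<theta>" and q: "q \<in> Lambda" and d: "bnd (mcoeff q) d"
  shows "\<theta> q zex = (\<Sum>\<rho>\<in>Fs d. mcoeff q \<rho> * \<theta> (msym \<rho>) zex)"
proof -
  have "\<theta> q = \<theta> (\<lambda>\<alpha>. \<Sum>\<rho>\<in>Fs d. mcoeff q \<rho> * msym \<rho> \<alpha>)" using expand[OF q d] by simp
  also have "\<dots> = (\<lambda>\<alpha>. \<Sum>\<rho>\<in>Fs d. mcoeff q \<rho> * \<theta> (msym \<rho>) \<alpha>)"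
    by (rule theta_sum[OF lin finite_Fs msym_Lambda])
  finally show ?thesis by simp
qed


definition Gs :: "nat \<Rightarrow> (nat \<Rightarrow> nat) set" where
  "Gs d = {k \<in> fin_seqs. sum_mset (Mk k) \<le> d}"

lemma Mk_Gs: "Mk ` Gs d = Fs d"
proof
  show "Mk ` Gs d \<subseteq> Fs d" unfolding Gs_def Fs_def using pos_Mk by auto
  show "Fs d \<subseteq> Mk ` Gs d"
  proof
    fix \<nu> assume "\<nu> \<in> Fs d"
    then have n: "pos \<nu>" "sum_mset \<nu> \<le> d" unfolding Fs_def by auto
    obtain k where k: "k \<in> fin_seqs" "Mk k = \<nu>" using Mk_surj[OF n(1)] by blast
    then have "k \<in> Gs d" using n(2) unfolding Gs_def by simp
    then show "\<nu> \<in> Mk ` Gs d" using k(2) by blast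
  qed
qed

lemma inj_Gs: "inj_on Mk (Gs d)"
  using Mk_inj unfolding Gs_def by (rule inj_on_subset) auto

lemma finite_Gs: "finite (Gs d)"
  using finite_Fs[of d] Mk_Gs[of d] inj_Gs[of d] by (metis finite_imageD)

lemma Dmono_zero:
  assumes "bnd f d" "k \<in> fin_seqs" "k \<notin> Gs d"
  shows "Dmono k (lift f) = (\<lambda>_. 0)"
proof -
  have s: "d < sum_mset (Mk k)" using assms(2,3) unfolding Gs_def by simp
  have "Dmono k (lift f) = lift (\<lambda>\<nu>. wk k * f (\<nu> + Mk k))" by (rule Dmono_lift)
  also have "\<dots> = lift (\<lambda>_. 0)"
  proof (rule lift_cong)
    fix \<nu> :: "nat multiset" assume "pos \<nu>"
    then have "f (\<nu> + Mk k) = 0" using assms(1) s pos_Mk[of k] unfolding bnd_def by simp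
    then show "wk k * f (\<nu> + Mk k) = 0" by simp
  qed
  finally show ?thesis using lift_zero by simp
qed

lemma Dseries_lift:
  assumes "bnd f d"
  shows "Dseries c (lift f) = lift (\<lambda>\<nu>. \<Sum>k\<in>Gs d. c k * wk k * f (\<nu> + Mk k))"
proof (rule ext)
  fix \<beta>
  let ?K = "{k \<in> fin_seqs. Dmono k (lift f) \<noteq> (\<lambda>_. 0)}"
  have sub: "?K \<subseteq> Gs d" using Dmono_zero[OF assms] by blast
  have G: "Gs d \<subseteq> fin_seqs" unfolding Gs_def by auto
  have "Dseries c (lift f) \<beta> = (\<Sum>k\<in>?K. c k * Dmono k (lift f) \<beta>)" unfolding Dseries_def ..
  also have "\<dots> = (\<Sum>k\<in>Gs d. c k * Dmono k (lift f) \<beta>)"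
  proof (rule sum.mono_neutral_left[OF finite_Gs sub])
    show "\<forall>i\<in>Gs d - ?K. c i * Dmono i (lift f) \<beta> = 0" using G by auto
  qed
  also have "\<dots> = (\<Sum>k\<in>Gs d. c k * lift (\<lambda>\<nu>. wk k * f (\<nu> + Mk k)) \<beta>)"
    by (simp add: Dmono_lift)
  also have "\<dots> = lift (\<lambda>\<nu>. \<Sum>k\<in>Gs d. c k * wk k * f (\<nu> + Mk k)) \<beta>"
    by (simp add: lift_def mult.assoc)
  finally show "Dseries c (lift f) \<beta> = lift (\<lambda>\<nu>. \<Sum>k\<in>Gs d. c k * wk k * f (\<nu> + Mk k)) \<beta>" .
qed

lemma bnd_shift: "bnd f d \<Longrightarrow> pos \<nu> \<Longrightarrow> d < sum_mset \<nu> \<Longrightarrow> pos \<mu> \<Longrightarrow> f (\<nu> + \<mu>) = 0"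
  unfolding bnd_def by simp

lemma dir1:
  assumes lin: "linear_on_Lambda \<theta>"
    and comm: "\<forall>a. \<forall>p\<in>Lambda. symE a (\<theta> p) = \<theta> (symE a p)"
  shows "\<exists>c :: (nat \<Rightarrow> nat) \<Rightarrow> complex. \<forall>p\<in>Lambda. \<theta> p = Dseries c p"
proof -
  have commT: "Tm {#x#} (\<theta> q) = \<theta> (Tm {#x#} q)" if "0 < x" "q \<in> Lambda" for x q
    using comm_Tm[OF lin comm that(2), of x] that(1) by (simp add: ms_def)
  define C where "C \<rho> = \<theta> (msym \<rho>) zex" for \<rho>
  define c where "c k = C (Mk k) / wk k" for k
  have "\<theta> p = Dseries c p" if p: "p \<in> Lambda" for p
  proof -
    obtain d where d: "bnd (mcoeff p) d" using Lambda_bnd[OF p] by blast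
    let ?f = "mcoeff p"
    have tp: "\<theta> p \<in> Lambda" using lin_Lambda[OF lin p] .
    have "\<theta> p = lift (mcoeff (\<theta> p))" using Lambda_lift[OF tp] by simp
    also have "\<dots> = lift (\<lambda>\<nu>. \<Sum>k\<in>Gs d. c k * wk k * ?f (\<nu> + Mk k))"
    proof (rule lift_cong)
      fix \<nu> assume n: "pos \<nu>"
      have "mcoeff (\<theta> p) \<nu> = \<theta> p (canon (shape zex + \<nu>))" using zex(2) by (simp add: mcoeff_def)
      also have "\<dots> = \<theta> (Tm \<nu> p) zex"
        using chain[OF lin commT n] p zex(1) by blast
      also have "\<dots> = (\<Sum>\<rho>\<in>Fs d. mcoeff (Tm \<nu> p) \<rho> * C \<rho>)"
        unfolding C_def by (rule theta_zex[OF lin Tm_Lambda[OF n p] Tm_bnd[OF n d]])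
      also have "\<dots> = (\<Sum>\<rho>\<in>Fs d. C \<rho> * ?f (\<nu> + \<rho>))"
        by (rule sum.cong) (auto simp: Fs_def Tm_def mcoeff_lift add.commute)
      also have "\<dots> = (\<Sum>\<rho>\<in>Mk ` Gs d. C \<rho> * ?f (\<nu> + \<rho>))" using Mk_Gs by simp
      also have "\<dots> = (\<Sum>k\<in>Gs d. C (Mk k) * ?f (\<nu> + Mk k))"
        using sum.reindex[OF inj_Gs] by simp
      also have "\<dots> = (\<Sum>k\<in>Gs d. c k * wk k * ?f (\<nu> + Mk k))"
        unfolding c_def using wk_nz by simp
      finally show "mcoeff (\<theta> p) \<nu> = (\<Sum>k\<in>Gs d. c k * wk k * ?f (\<nu> + Mk k))" .
    qed
    also have "\<dots> = Dseries c (lift ?f)" using Dseries_lift[OF d] by simp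
    also have "lift ?f = p" using Lambda_lift[OF p] .
    finally show ?thesis .
  qed
  then show ?thesis by blast
qed

lemma dir2:
  assumes lin: "linear_on_Lambda \<theta>"
    and ser: "\<forall>p\<in>Lambda. \<theta> p = Dseries c p"
  shows "\<forall>a. \<forall>p\<in>Lambda. symE a (\<theta> p) = \<theta> (symE a p)"
proof (intro allI ballI)
  fix a p assume p: "p \<in> Lambda"
  obtain d where d: "bnd (mcoeff p) d" using Lambda_bnd[OF p] by blast
  define f where "f = mcoeff p"
  have pf: "p = lift f" unfolding f_def using Lambda_lift[OF p] by simp
  have fd: "bnd f d" using d unfolding f_def .
  define g where "g \<nu> = (\<Sum>j\<le>d. f (\<nu> + ms j) * a ^ j)" for \<nu>
  define h where "h \<nu> = (\<Sum>k\<in>Gs d. c k * wk k * f (\<nu> + Mk k))" for \<nu>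
  have gd: "bnd g d" unfolding bnd_def g_def using bnd_shift[OF fd] by simp
  have hd: "bnd h d" unfolding bnd_def h_def using bnd_shift[OF fd] pos_Mk by simp
  have sp: "symE a p = lift g" unfolding pf g_def by (rule symE_lift[OF fd])
  have gL: "lift g \<in> Lambda" by (rule lift_in_Lambda[OF gd])
  have "symE a (\<theta> p) = symE a (lift h)"
    using ser p pf Dseries_lift[OF fd, of c] unfolding h_def by simp
  also have "\<dots> = lift (\<lambda>\<nu>. \<Sum>j\<le>d. h (\<nu> + ms j) * a ^ j)" by (rule symE_lift[OF hd])
  also have "\<dots> = lift (\<lambda>\<nu>. \<Sum>k\<in>Gs d. c k * wk k * g (\<nu> + Mk k))"
  proof (rule lift_cong)
    fix \<nu> :: "nat multiset"
    have "(\<Sum>j\<le>d. h (\<nu> + ms j) * a ^ j) = (\<Sum>j\<le>d. \<Sum>k\<in>Gs d. c k * wk k * f (\<nu> + ms j + Mk k) * a ^ j)"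
      unfolding h_def by (simp add: sum_distrib_right)
    also have "\<dots> = (\<Sum>k\<in>Gs d. \<Sum>j\<le>d. c k * wk k * f (\<nu> + ms j + Mk k) * a ^ j)"
      by (rule sum.swap)
    also have "\<dots> = (\<Sum>k\<in>Gs d. c k * wk k * g (\<nu> + Mk k))"
      unfolding g_def by (simp add: sum_distrib_left mult.assoc add_ac)
    finally show "(\<Sum>j\<le>d. h (\<nu> + ms j) * a ^ j) = (\<Sum>k\<in>Gs d. c k * wk k * g (\<nu> + Mk k))" .
  qed
  also have "\<dots> = Dseries c (lift g)" using Dseries_lift[OF gd] by simp
  also have "\<dots> = \<theta> (symE a p)" using ser gL sp by simp
  finally show "symE a (\<theta> p) = \<theta> (symE a p)" .
qed

theorem mainTheorem7:
  fixes \<theta> :: "sfun \<Rightarrow> sfun"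
  assumes "linear_on_Lambda \<theta>"
  shows "(\<forall>a. \<forall>p\<in>Lambda. symE a (\<theta> p) = \<theta> (symE a p))
     \<longleftrightarrow> (\<exists>c :: (nat \<Rightarrow> nat) \<Rightarrow> complex. \<forall>p\<in>Lambda. \<theta> p = Dseries c p)"
  using dir1[OF assms] dir2[OF assms] by blast

end
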